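(* Let $H$ be a complex Hadamard matrix. Let $\{R,R_1,R_2\}$ be a partition of the set of rows of $H$ and $\{C,C_1,C_2\}$ a partition of the set of columns of $H$, and suppose there is $s\in\mathbb{C}$ such that: (1) every column of the submatrix with rows $R$ and columns $C$ has entry sum $s$; (2) every column of the submatrix with rows $R_1$ and columns $C_1$ has entry sum $-\overline{s}$; (3) the submatrix with rows $R$ and columns $C_1$ and the submatrix with rows $R_1$ and columns $C$ are all-ones matrices; (4) every column of the submatrix with rows $R$ and columns $C_2$, and every column of the submatrix with rows $R_1$ and columns $C_2$, has entry sum $0$. Then for every $z\in\mathbb{T}$, the matrix $K$ obtained from $H$ by multiplying every entry of the submatrix with rows $R_1$ and columns $C_2$ by $z$, and simultaneously every entry of the submatrix with rows $R_2$ and columns $C_1$ by $\overline{z}$ (all other entries unchanged), is a complex Hadamard matrix.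
   Context: $\mathbb{T}$ is the set of complex numbers of modulus $1$. A complex Hadamard matrix of order $n$ is an $n\times n$ matrix with all entries in $\mathbb{T}$ and $HH^{\ast}=nI_n$. *)

theory Defs
  imports "HOL-Analysis.Analysis"
begin

definition unit_circle :: "complex set" where
  "unit_circle = {z. norm z = 1}"

definition adjoint_mat :: "complex^'n^'m \<Rightarrow> complex^'m^'n" where
  "adjoint_mat A = (\<chi> i j. cnj (A $ j $ i))"

definition complex_hadamard :: "complex^'n^'n \<Rightarrow> bool" where
  "complex_hadamard H \<longleftrightarrow>
     (\<forall>i j. H $ i $ j \<in> unit_circle) \<and>
     H ** adjoint_mat H = of_nat CARD('n) *\<^sub>R mat 1"

definition partition3 :: "'a set \<Rightarrow> 'a set \<Rightarrow> 'a set \<Rightarrow> 'a set \<Rightarrow> bool" where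
  "partition3 U A B C \<longleftrightarrow> A \<noteq> {} \<and> B \<noteq> {} \<and> C \<noteq> {} \<and>
     A \<inter> B = {} \<and> A \<inter> C = {} \<and> B \<inter> C = {} \<and> A \<union> B \<union> C = U"

end

theory Submission
  imports Defs
begin


lemma mm_scaleR_right: fixes A B :: "complex^'n^'n" shows "A ** (c *\<^sub>R B) = c *\<^sub>R (A ** B)"
  by (simp add: vec_eq_iff matrix_matrix_mult_def scaleR_sum_right)
lemma mm_scaleR_left: fixes A B :: "complex^'n^'n" shows "(c *\<^sub>R A) ** B = c *\<^sub>R (A ** B)"
  by (simp add: vec_eq_iff matrix_matrix_mult_def scaleR_sum_right)

lemma adj_left:
  fixes A :: "complex^'n^'n"
  assumes "A ** adjoint_mat A = c *\<^sub>R mat 1" "c \<noteq> 0"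
  shows "adjoint_mat A ** A = c *\<^sub>R mat 1"
proof -
  have "A ** ((1/c) *\<^sub>R adjoint_mat A) = mat 1"
    using assms by (simp add: mm_scaleR_right)
  hence "((1/c) *\<^sub>R adjoint_mat A) ** A = mat 1"
    using matrix_left_right_inverse by blast
  hence "c *\<^sub>R (((1/c) *\<^sub>R adjoint_mat A) ** A) = c *\<^sub>R mat 1" by simp
  thus ?thesis using assms(2) by (simp add: mm_scaleR_left)
qed

lemma sR1: "c *\<^sub>R (1::complex) = of_real c" by (simp add: scaleR_conv_of_real)

lemma adjA_entry:
  fixes A :: "complex^'n^'n"
  shows "(adjoint_mat A ** A = c *\<^sub>R mat 1) \<longleftrightarrow>
    (\<forall>j k. (\<Sum>i\<in>UNIV. cnj (A$i$j) * A$i$k) = (if j = k then of_real c else 0))"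
  by (auto simp: vec_eq_iff matrix_matrix_mult_def adjoint_mat_def mat_def sR1)

lemma Aadj_entry:
  fixes A :: "complex^'n^'n"
  shows "(A ** adjoint_mat A = c *\<^sub>R mat 1) \<longleftrightarrow>
    (\<forall>j k. (\<Sum>i\<in>UNIV. A$j$i * cnj (A$k$i)) = (if j = k then of_real c else 0))"
  by (auto simp: vec_eq_iff matrix_matrix_mult_def adjoint_mat_def mat_def sR1)


lemma adj_adj: "adjoint_mat (adjoint_mat (A::complex^'n^'m)) = A"
  by (simp add: adjoint_mat_def vec_eq_iff)

lemma split3:
  fixes f :: "'n::finite \<Rightarrow> complex"
  assumes "partition3 UNIV R R1 R2"
  shows "sum f UNIV = sum f R + sum f R1 + sum f R2"
proof -
  have "UNIV = R \<union> R1 \<union> R2" "R \<inter> R1 = {}" "(R \<union> R1) \<inter> R2 = {}"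
    using assms unfolding partition3_def by auto
  hence "sum f (R \<union> R1 \<union> R2) = sum f (R \<union> R1) + sum f R2"
    by (intro sum.union_disjoint) auto
  moreover have "sum f (R \<union> R1) = sum f R + sum f R1"
    using \<open>R \<inter> R1 = {}\<close> by (intro sum.union_disjoint) auto
  ultimately show ?thesis using \<open>UNIV = R \<union> R1 \<union> R2\<close> by simp
qed

theorem theorem6p7:
  fixes H :: "complex^'n^'n" and R R1 R2 C C1 C2 :: "'n set" and s :: complex
  assumes "complex_hadamard H"
    and "partition3 UNIV R R1 R2"
    and "partition3 UNIV C C1 C2"
    and "\<forall>j\<in>C. (\<Sum>i\<in>R. H $ i $ j) = s"
    and "\<forall>j\<in>C1. (\<Sum>i\<in>R1. H $ i $ j) = - cnj s"
    and "\<forall>i\<in>R. \<forall>j\<in>C1. H $ i $ j = 1"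
    and "\<forall>i\<in>R1. \<forall>j\<in>C. H $ i $ j = 1"
    and "\<forall>j\<in>C2. (\<Sum>i\<in>R. H $ i $ j) = 0"
    and "\<forall>j\<in>C2. (\<Sum>i\<in>R1. H $ i $ j) = 0"
  shows "\<forall>z\<in>unit_circle. complex_hadamard
           ((\<chi> i j. if i \<in> R1 \<and> j \<in> C2 then z * H $ i $ j
                    else if i \<in> R2 \<and> j \<in> C1 then cnj z * H $ i $ j
                    else H $ i $ j) :: complex^'n^'n)"
proof
  fix z assume "z \<in> unit_circle"
  hence nz: "norm z = 1" by (simp add: unit_circle_def)
  have zc1: "cnj z * z = 1" "z * cnj z = 1"
    using nz by (simp_all add: complex_norm_square[symmetric] mult.commute)
  define K where "K = ((\<chi> i j. if i \<in> R1 \<and> j \<in> C2 then z * H $ i $ j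
                    else if i \<in> R2 \<and> j \<in> C1 then cnj z * H $ i $ j
                    else H $ i $ j) :: complex^'n^'n)"
  define n where "n = real CARD('n)"
  have n0: "n \<noteq> 0" by (simp add: n_def)
  have Hu: "\<And>i j. norm (H $ i $ j) = 1" using assms(1)
    by (simp add: complex_hadamard_def unit_circle_def)
  have "adjoint_mat H ** H = n *\<^sub>R mat 1"
    using adj_left[OF _ n0, of H] assms(1) unfolding complex_hadamard_def n_def by blast
  hence P: "\<And>j k. (\<Sum>i\<in>UNIV. cnj (H$i$j) * H$i$k) = (if j = k then of_real n else 0)"
    by (simp add: adjA_entry)
  have pR: "R \<inter> R1 = {}" "R \<inter> R2 = {}" "R1 \<inter> R2 = {}"
    using assms(2) by (auto simp: partition3_def)
  have pC: "C \<inter> C1 = {}" "C \<inter> C2 = {}" "C1 \<inter> C2 = {}" "\<And>j. j \<in> C \<or> j \<in> C1 \<or> j \<in> C2"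
    using assms(3) by (auto simp: partition3_def)
  define a where "a j = (if j \<in> C2 then z else 1)" for j
  define b where "b j = (if j \<in> C1 then cnj z else 1)" for j
  have KR: "\<And>i j. i \<in> R \<Longrightarrow> K$i$j = H$i$j" using pR by (auto simp: K_def)
  have KR1: "\<And>i j. i \<in> R1 \<Longrightarrow> K$i$j = a j * H$i$j" using pR by (auto simp: K_def a_def)
  have KR2: "\<And>i j. i \<in> R2 \<Longrightarrow> K$i$j = b j * H$i$j" using pR by (auto simp: K_def b_def)
  have Kcol: "(\<Sum>i\<in>UNIV. cnj (K$i$j) * K$i$k) = (if j = k then of_real n else 0)" for j k
  proof -
    define S where "S X = (\<Sum>i\<in>X. cnj (H$i$j) * H$i$k)" for X
    have PS: "S R + S R1 + S R2 = (if j = k then of_real n else 0)"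
      using P[of j k] split3[OF assms(2)] unfolding S_def by metis
    have "(\<Sum>i\<in>UNIV. cnj (K$i$j) * K$i$k) =
       (\<Sum>i\<in>R. cnj (K$i$j) * K$i$k) + (\<Sum>i\<in>R1. cnj (K$i$j) * K$i$k) + (\<Sum>i\<in>R2. cnj (K$i$j) * K$i$k)"
      by (rule split3[OF assms(2)])
    also have "\<dots> = S R + (cnj (a j) * a k) * S R1 + (cnj (b j) * b k) * S R2"
      unfolding S_def sum_distrib_left
      by (simp add: KR KR1 KR2 mult_ac)
    finally have E: "(\<Sum>i\<in>UNIV. cnj (K$i$j) * K$i$k) = S R + (cnj (a j) * a k) * S R1 + (cnj (b j) * b k) * S R2" .
    have cs: "\<And>X f. (\<Sum>i\<in>X. cnj (f i)) = cnj (\<Sum>i\<in>X. f i)" by (simp add: cnj_sum)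
    consider "j \<in> C" "k \<in> C" | "j \<in> C1" "k \<in> C1" | "j \<in> C2" "k \<in> C2"
      | "j \<in> C" "k \<in> C1" | "j \<in> C1" "k \<in> C" | "j \<in> C" "k \<in> C2" | "j \<in> C2" "k \<in> C"
      | "j \<in> C1" "k \<in> C2" | "j \<in> C2" "k \<in> C1"
      using pC(4) by metis
    then show ?thesis
    proof cases
      case 1 then show ?thesis using E PS pC by (auto simp add: a_def b_def)
    next
      case 2 then show ?thesis using E PS pC zc1 by (auto simp add: a_def b_def)
    next
      case 3 then show ?thesis using E PS pC zc1 by (auto simp add: a_def b_def)
    next
      case 4
      have "S R = cnj s" unfolding S_def using 4 assms(4,6)
        by (simp add: cs)
      moreover have "S R1 = - cnj s" unfolding S_def using 4 assms(5,7) by simp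
      ultimately show ?thesis using E PS pC 4 by (auto simp add: a_def b_def)
    next
      case 5
      have "S R = s" unfolding S_def using 5 assms(4,6) by simp
      moreover have "S R1 = - s" unfolding S_def using 5 assms(5,7) by (simp add: cs)
      ultimately show ?thesis using E PS pC 5 by (auto simp add: a_def b_def)
    next
      case 6
      have "S R1 = 0" unfolding S_def using 6 assms(7,9) by simp
      then show ?thesis using E PS pC 6 by (auto simp add: a_def b_def)
    next
      case 7
      have "S R1 = 0" unfolding S_def using 7 assms(7,9) by (simp add: cs)
      then show ?thesis using E PS pC 7 by (auto simp add: a_def b_def)
    next
      case 8
      have "S R = 0" unfolding S_def using 8 assms(6,8) by simp
      then show ?thesis using E PS pC 8 by (auto simp add: a_def b_def simp flip: distrib_left)
    next
      case 9
      have "S R = 0" unfolding S_def using 9 assms(6,8) by (simp add: cs)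
      then show ?thesis using E PS pC 9 by (auto simp add: a_def b_def simp flip: distrib_left)
    qed
  qed
  have "adjoint_mat K ** K = n *\<^sub>R mat 1"
    using Kcol by (simp add: adjA_entry)
  hence "K ** adjoint_mat K = n *\<^sub>R mat 1"
    using adj_left[of "adjoint_mat K" n] n0 by (simp add: adj_adj)
  moreover have "\<forall>i j. K $ i $ j \<in> unit_circle"
    by (simp add: K_def unit_circle_def norm_mult nz Hu)
  ultimately show "complex_hadamard K" by (simp add: complex_hadamard_def n_def)
qed

end
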